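(* Let $m=2$, $\mu = (\mu_1,\mu_2)^\top\in\mathbb{R}^2$, and let $M = \begin{bmatrix} M_{11} & M_{12}\\ M_{12} & M_{22}\end{bmatrix}$ be a symmetric positive semidefinite matrix that is row-stochastic (non-negative entries, each row summing to $1$). Let $z\sim\mathcal{N}(\mu, M)$ and $p = (p_1,p_2) := \mathrm{softmax}(z)$. Let $q' = (1,0)^\top$ and $p' := M^\top q' = (M_{11}, M_{12})^\top$. Define $\alpha_{\mathrm{TLI}} := \min\{p_1,1\} + \min\{p_2, 0\}$ and $\alpha_{\mathrm{RDK}} := \min\{p_1, p'_1\} + \min\{p_2, p'_2\}$. Assume $\mu_1 + 3\sqrt{M_{11}} \le \mu_2 - 3\sqrt{M_{22}}$. Then, with probability at least $99.46\%$ over $z$, \[ \alpha_{\mathrm{TLI}} \le \alpha_{\mathrm{RDK}} . \]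
   Context: $\mathrm{softmax}(z)_i = \exp(z_i)/(\exp(z_1)+\exp(z_2))$. Here $\alpha_{\mathrm{TLI}}$ is the acceptance rate $\sum_x \min\{p(x), q'(x)\}$ between $p$ and the TLI drafter $q'$, and $\alpha_{\mathrm{RDK}}$ is the acceptance rate between $p$ and the redistributed drafter $p'$. *)

theory Defs
  imports "HOL-Probability.Probability"
begin

definition normal_rv :: "'a measure \<Rightarrow> ('a \<Rightarrow> real) \<Rightarrow> real \<Rightarrow> real \<Rightarrow> bool" where
  "normal_rv P X m v \<longleftrightarrow>
     (if v > 0 then distributed P lborel X (\<lambda>x. ennreal (normal_density m (sqrt v) x))
      else X \<in> borel_measurable P \<and> (AE \<omega> in P. X \<omega> = m))"

text \<open>z = (z_1, z_2) ~ N(mu, M) with mu = (mu1, mu2), M = [[M11, M12],[M12, M22]]: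
  every linear combination a z_1 + b z_2 is normal with mean a mu1 + b mu2 and
  variance (a,b) M (a,b)^T (standard definition of a possibly degenerate Gaussian vector).\<close>
definition gaussian2 :: "'a measure \<Rightarrow> ('a \<Rightarrow> real \<times> real) \<Rightarrow> real \<Rightarrow> real \<Rightarrow> real \<Rightarrow> real \<Rightarrow> real \<Rightarrow> bool" where
  "gaussian2 P z mu1 mu2 M11 M12 M22 \<longleftrightarrow>
     (\<forall>a b. normal_rv P (\<lambda>\<omega>. a * fst (z \<omega>) + b * snd (z \<omega>)) (a * mu1 + b * mu2)
                 (a\<^sup>2 * M11 + 2 * a * b * M12 + b\<^sup>2 * M22))"

definition softmax2 :: "real \<times> real \<Rightarrow> real \<times> real" where
  "softmax2 z = (exp (fst z) / (exp (fst z) + exp (snd z)), exp (snd z) / (exp (fst z) + exp (snd z)))"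

definition accept2 :: "real \<times> real \<Rightarrow> real \<times> real \<Rightarrow> real" where
  "accept2 p q = min (fst p) (fst q) + min (snd p) (snd q)"

end

theory Submission
  imports Defs
begin

lemma pointwise:
  fixes x1 x2 c :: real
  assumes "x1 \<le> x2" "0 \<le> c" "c \<le> 1"
  shows "accept2 (softmax2 (x1,x2)) (1, 0) \<le> accept2 (softmax2 (x1,x2)) (c, 1 - c)"
proof -
  define p where "p = exp x1 / (exp x1 + exp x2)"
  have e: "exp x1 \<le> exp x2" using assms by simp
  have S: "exp x1 + exp x2 > 0" by (simp add: add_pos_pos)
  have "exp x1 / (exp x1 + exp x2) + exp x2 / (exp x1 + exp x2) = 1"
    using S by (simp add: add_divide_distrib[symmetric])
  then have p2: "exp x2 / (exp x1 + exp x2) = 1 - p" unfolding p_def by linarith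
  have pp: "0 < p" "p \<le> 1/2" unfolding p_def using e S by (auto simp: field_simps)
  show ?thesis unfolding accept2_def softmax2_def fst_conv snd_conv p_def[symmetric] p2
    using pp assms by (auto simp: min_def)
qed

lemma markov6:
  fixes m t s :: real
  assumes "0 < s" "m + t \<le> 0" "0 < t"
  shows "(\<integral>x. normal_density m s x * indicator {0<..} x \<partial>lborel) \<le> 15 * s^6 / t^6"
proof -
  have "(\<integral>x. normal_density m s x * indicator {0<..} x \<partial>lborel)
       \<le> (\<integral>x. normal_density m s x * (x - m)^(2*3) / t^6 \<partial>lborel)"
  proof (rule integral_mono)
    show "integrable lborel (\<lambda>x. normal_density m s x * indicator {0<..} x)"
      by (rule integrable_real_mult_indicator) (use assms in auto)
    show "integrable lborel (\<lambda>x. normal_density m s x * (x - m)^(2*3) / t^6)"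
      using integrable_normal_moment[OF assms(1), of m "2*3"] by simp
    fix x :: real
    show "normal_density m s x * indicator {0<..} x \<le> normal_density m s x * (x - m)^(2*3) / t^6"
    proof (cases "x > 0")
      case True
      then have "t \<le> x - m" using assms by simp
      then have "t^6 \<le> (x-m)^6" using assms by (intro power_mono) auto
      then have "1 \<le> (x - m)^(2*3) / t^6" using assms by simp
      from mult_left_mono[OF this normal_density_nonneg] True show ?thesis by simp
    next
      case False
      have "0 \<le> (x - m)^(2*3)" by (simp add: power_mult)
      with False show ?thesis by simp
    qed
  qed
  also have "\<dots> = (\<integral>x. normal_density m s x * (x - m)^(2*3) \<partial>lborel) / t^6" by simp
  also have "\<dots> = 15 * s^6 / t^6"
    using integral_normal_moment_even[OF assms(1), of m 3]
    by (simp add: fact_numeral power_divide field_simps) 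
  finally show ?thesis .
qed

lemma normal_rv_meas: "normal_rv P X m v \<Longrightarrow> X \<in> borel_measurable P"
  unfolding normal_rv_def by (auto split: if_splits dest: distributed_measurable)

theorem theorem3:
  fixes P :: "'a measure" and z :: "'a \<Rightarrow> real \<times> real"
    and mu1 mu2 M11 M12 M22 :: real
  assumes "prob_space P"
    and psd: "\<forall>x1 x2. x1\<^sup>2 * M11 + 2 * x1 * x2 * M12 + x2\<^sup>2 * M22 \<ge> 0"
    and nonneg: "M11 \<ge> 0" "M12 \<ge> 0" "M22 \<ge> 0"
    and rows: "M11 + M12 = 1" "M12 + M22 = 1"
    and gauss: "gaussian2 P z mu1 mu2 M11 M12 M22"
    and sep: "mu1 + 3 * sqrt M11 \<le> mu2 - 3 * sqrt M22"
  shows "measure P {\<omega> \<in> space P.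
           accept2 (softmax2 (z \<omega>)) (1, 0) \<le> accept2 (softmax2 (z \<omega>)) (M11, M12)}
         \<ge> 9946 / 10000"
proof -
  interpret prob_space P by fact
  define c where "c = M11"
  have M22: "M22 = c" and M12: "M12 = 1 - c" using rows unfolding c_def by linarith+
  have c1: "c \<le> 1" "0 \<le> c" using nonneg M12 c_def by auto
  have "0 \<le> 1\<^sup>2 * M11 + 2 * 1 * (-1) * M12 + (-1)\<^sup>2 * M22" using psd by blast
  then have c2: "1/2 \<le> c" unfolding M22 M12 c_def[symmetric] by simp
  define v where "v = 4 * c - 2"
  define D where "D = (\<lambda>\<omega>. 1 * fst (z \<omega>) + (-1) * snd (z \<omega>))"
  have ND: "normal_rv P D (mu1 - mu2) v"
  proof -
    have "normal_rv P (\<lambda>\<omega>. 1 * fst (z \<omega>) + (-1) * snd (z \<omega>)) (1 * mu1 + (-1) * mu2)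
                 (1\<^sup>2 * M11 + 2 * 1 * (-1) * M12 + (-1)\<^sup>2 * M22)"
      using gauss unfolding gaussian2_def by blast
    moreover have "1\<^sup>2 * M11 + 2 * 1 * (-1) * M12 + (-1)\<^sup>2 * M22 = v"
      unfolding v_def M22 M12 c_def by simp
    ultimately show ?thesis unfolding D_def by simp
  qed
  have m1: "(\<lambda>\<omega>. fst (z \<omega>)) \<in> borel_measurable P"
  proof -
    have "normal_rv P (\<lambda>\<omega>. 1 * fst (z \<omega>) + 0 * snd (z \<omega>)) (1 * mu1 + 0 * mu2)
                 (1\<^sup>2 * M11 + 2 * 1 * 0 * M12 + 0\<^sup>2 * M22)"
      using gauss unfolding gaussian2_def by blast
    from normal_rv_meas[OF this] show ?thesis by simp
  qed
  have m2: "(\<lambda>\<omega>. snd (z \<omega>)) \<in> borel_measurable P"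
  proof -
    have "normal_rv P (\<lambda>\<omega>. 0 * fst (z \<omega>) + 1 * snd (z \<omega>)) (0 * mu1 + 1 * mu2)
                 (0\<^sup>2 * M11 + 2 * 0 * 1 * M12 + 1\<^sup>2 * M22)"
      using gauss unfolding gaussian2_def by blast
    from normal_rv_meas[OF this] show ?thesis by simp
  qed
  have mD: "D \<in> borel_measurable P" using ND by (rule normal_rv_meas)
  define G where "G = {\<omega> \<in> space P.
           accept2 (softmax2 (z \<omega>)) (1, 0) \<le> accept2 (softmax2 (z \<omega>)) (M11, M12)}"
  define B where "B = {\<omega> \<in> space P. 0 < D \<omega>}"
  have GS: "G \<in> sets P" unfolding G_def accept2_def softmax2_def using m1 m2 by measurable
  have BS: "B \<in> sets P" unfolding B_def using mD by measurable
  have sub: "space P - B \<subseteq> G"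
  proof
    fix \<omega> assume "\<omega> \<in> space P - B"
    then have w: "\<omega> \<in> space P" "fst (z \<omega>) \<le> snd (z \<omega>)" unfolding B_def D_def by auto
    have "z \<omega> = (fst (z \<omega>), snd (z \<omega>))" by simp
    then show "\<omega> \<in> G" unfolding G_def using w pointwise[OF w(2) c1(2) c1(1)]
      by (simp add: M12 c_def[symmetric])
  qed
  have t0: "6 * sqrt c \<le> mu2 - mu1" using sep unfolding M22 c_def[symmetric] by simp
  have BI: "prob B = (\<integral>\<omega>. indicator {0<..} (D \<omega>) \<partial>P)"
  proof -
    have "(\<integral>\<omega>. indicator {0<..} (D \<omega>) \<partial>P) = (\<integral>\<omega>. (indicator B \<omega> :: real) \<partial>P)"
      by (rule Bochner_Integration.integral_cong) (auto simp: B_def indicator_def)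
    moreover have "B \<inter> space P = B" unfolding B_def by auto
    ultimately show ?thesis by simp
  qed
  have PB: "prob B \<le> 54 / 10000"
  proof (cases "v > 0")
    case True
    define s where "s = sqrt v"
    have s0: "0 < s" using True s_def by simp
    have dist: "distributed P lborel D (\<lambda>x. ennreal (normal_density (mu1 - mu2) s x))"
      using ND True unfolding normal_rv_def s_def by simp
    have "(\<integral>x. normal_density (mu1 - mu2) s x * indicator {0<..} x \<partial>lborel) = (\<integral>\<omega>. indicator {0<..} (D \<omega>) \<partial>P)"
      by (rule distributed_integral[OF dist]) auto
    then have "prob B = (\<integral>x. normal_density (mu1 - mu2) s x * indicator {0<..} x \<partial>lborel)"
      using BI by simp
    also have "\<dots> \<le> 15 * s^6 / (mu2 - mu1)^6"
    proof (intro markov6 s0)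
      have "0 < sqrt c" using c2 by simp
      then show "0 < mu2 - mu1" using t0 by linarith
    qed simp
    also have "\<dots> \<le> 54 / 10000"
    proof -
      have s6: "s^6 = v^3" unfolding s_def using True
        by (metis less_imp_le power_mult real_sqrt_pow2 numeral_times_numeral[of "num.Bit0 num.One" "num.Bit1 num.One"] semiring_norm(2) mult_2 numeral_Bit0 numeral_Bit1 )
      have sc: "0 < sqrt c" using c2 by simp
      have "(6 * sqrt c)^2 \<le> (mu2 - mu1)^2" using t0 sc by (intro power_mono) auto
      then have t2: "36 * c \<le> (mu2 - mu1)^2" using c1 by (simp add: power_mult_distrib)
      have t6: "(mu2 - mu1)^6 = ((mu2 - mu1)^2)^3" by (simp add: power_mult[symmetric])
      have "(36 * c)^3 \<le> ((mu2 - mu1)^2)^3" using t2 c1 by (intro power_mono) auto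
      moreover have "v^3 \<le> (2*c)^3" using True c1 unfolding v_def by (intro power_mono) auto
      moreover have "0 < c" using c2 by simp
      ultimately show ?thesis unfolding s6 t6
        by (simp add: power_mult_distrib divide_simps) (smt (verit) mult_left_mono zero_less_power)
    qed
    finally show ?thesis .
  next
    case False
    then have AE: "AE \<omega> in P. D \<omega> = mu1 - mu2" using ND unfolding normal_rv_def by simp
    have "0 < sqrt c" using c2 by simp
    then have "mu1 - mu2 < 0" using t0 by linarith
    then have "AE \<omega> in P. \<not> 0 < D \<omega>" using AE by (auto elim: AE_mp)
    then have "prob B = 0" unfolding B_def by (rule prob_eq_0_AE)
    then show ?thesis by simp
  qed
  have "prob (space P - B) = 1 - prob B" using BS by (rule prob_compl)
  moreover have "prob (space P - B) \<le> prob G" using sub GS by (intro finite_measure_mono)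
  ultimately show ?thesis using PB unfolding G_def by simp
qed

end
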